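(* Let $a,b$ be coprime positive integers, $q=a/b$, and let $\mathbf m=(m_0,\dots,m_k)$ and $\mathbf n=(n_0,\dots,n_l)$ be paths for $q$ with $c(q,\mathbf m)=c(q,\mathbf n)$. Write $a\,c(q,\mathbf m_j)=u_j/v_j$ ($j=0,\dots,k-1$) and $a\,c(q,\mathbf n_j)=x_j/y_j$ ($j=0,\dots,l-1$) as reduced fractions, and let $N$ be a positive integer with $u_j\mid N$ for $j=0,\dots,k-1$ and $x_j\mid N$ for $j=0,\dots,l-1$. If $k\ne l$, then $w_{q'}$ is not unique for every $q'=a/b'$ with $b'$ a positive integer such that $b'\equiv\pm b\pmod N$ and $b'\ne\big(w_q(\mathbf m)/w_q(\mathbf n)\big)^{2/(k-l)}b$. If $k=l$ and $w_q(\mathbf m)\ne w_q(\mathbf n)$, then $w_{q'}$ is not unique for every $q'=a/b'$ with $b'$ a positive integer such that $b'\equiv\pm b\pmod N$.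
   Context: For $q>0$, $k\ge0$ and $\mathbf m=(m_0,\dots,m_k)\in\mathbb Z^{k+1}$ put $\mathbf m_j=(m_0,\dots,m_j)$; define $c(q,\mathbf m_0)=m_0$ and $c(q,\mathbf m_j)=m_j+\frac{1}{q\,c(q,\mathbf m_{j-1})}$ for $1\le j\le k$. $\mathbf m$ is a path for $q$ of length $k$ if $c(q,\mathbf m_j)\ne0$ for $0\le j\le k-1$. The weight is $w_q(\mathbf m)=q^{k/2}\prod_{j=0}^{k-1}|c(q,\mathbf m_j)|$ (and $1$ if $k=0$). The weight $w_q$ is unique if $w_q(\mathbf m)=w_q(\mathbf n)$ for all paths $\mathbf m,\mathbf n$ for $q$ with $c(q,\mathbf m)=c(q,\mathbf n)$. *)

theory Defs
  imports Complex_Main "HOL-Number_Theory.Cong"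
begin

text \<open>A path (m_0,...,m_k) is represented by the nonempty integer list [m_0,...,m_k];
  its length k is (length m - 1). The prefix m_j is take (Suc j) m.\<close>

definition cval :: "real \<Rightarrow> int list \<Rightarrow> real" where
  "cval q ms = foldl (\<lambda>c m. real_of_int m + 1 / (q * c)) (real_of_int (hd ms)) (tl ms)"

definition plen :: "int list \<Rightarrow> nat" where
  "plen ms = length ms - 1"

definition is_path :: "real \<Rightarrow> int list \<Rightarrow> bool" where
  "is_path q ms \<longleftrightarrow> ms \<noteq> [] \<and> (\<forall>j < plen ms. cval q (take (Suc j) ms) \<noteq> 0)"

definition weight :: "real \<Rightarrow> int list \<Rightarrow> real" where
  "weight q ms = q powr (real (plen ms) / 2) * (\<Prod>j<plen ms. \<bar>cval q (take (Suc j) ms)\<bar>)"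

definition weight_unique :: "real \<Rightarrow> bool" where
  "weight_unique q \<longleftrightarrow> (\<forall>ms ns. is_path q ms \<and> is_path q ns \<and> cval q ms = cval q ns
      \<longrightarrow> weight q ms = weight q ns)"

definition reduced_num_dvd :: "real \<Rightarrow> int \<Rightarrow> bool" where
  "reduced_num_dvd r N \<longleftrightarrow> (\<exists>u v. v > 0 \<and> coprime u v \<and> r = real_of_int u / real_of_int v \<and> u dvd N)"

end

theory Submission
  imports Defs
begin

lemma cval_single[simp]: "cval q [x] = real_of_int x"
  by (simp add: cval_def)

lemma cval_snoc: "xs \<noteq> [] \<Longrightarrow> cval q (xs @ [x]) = real_of_int x + 1 / (q * cval q xs)"
  by (cases xs) (simp_all add: cval_def)

lemma step_alg:
  fixes a b b' t K u v x e s :: int and C :: real and p :: nat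
  assumes "a > 0" "b > 0" "b' > 0" "b' = e*b + t*(u*K)" "e=1 \<or> e=-1" "s=1 \<or> s=-1"
    "v > 0" "u \<noteq> 0" "a * C = u / v"
  shows "real_of_int (s*e^(Suc p)*x - s*e^p*t*K*v) + 1 / (a / b' * (s * e^p * C))
     = s * e^(Suc p) * (x + 1 / (a / b * C))"
proof -
  have ep: "(real_of_int e)^p = 1 \<or> (real_of_int e)^p = -1" using assms(5)
    by (cases "even p") auto
  have C: "C = u / (v * a)"
  proof -
    have "C = (a*C)/a" using assms(1) by simp
    also have "\<dots> = u/(v*a)" using assms(9) by (simp add: mult.commute)
    finally show ?thesis .
  qed
  show ?thesis using assms(1,2,3,6,7,8) ep assms(5) unfolding C assms(4)
    by (auto simp: field_simps)
qed


lemma construct: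
  fixes a b b' t N e s :: int
  assumes pos: "a > 0" "b > 0" "b' > 0" and bb: "b' = e*b + t*N"
    and es: "e=1 \<or> e=-1" "s=1 \<or> s=-1"
  shows "ms \<noteq> [] \<Longrightarrow> (\<forall>j<length ms - 1. cval (a/b) (take (Suc j) ms) \<noteq> 0 \<and>
            reduced_num_dvd (a * cval (a/b) (take (Suc j) ms)) N) \<Longrightarrow>
    \<exists>ms'. length ms' = length ms \<and>
      (\<forall>j<length ms. cval (a/b') (take (Suc j) ms') = s * e^j * cval (a/b) (take (Suc j) ms))"
proof (induction ms rule: rev_induct)
  case Nil
  then show ?case by simp
next
  case (snoc x xs)
  show ?case
  proof (cases "xs = []")
    case True
    then show ?thesis by (intro exI[of _ "[s*x]"]) simp
  next
    case False
    note xsne = False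
    have "\<forall>j<length xs - 1. cval (a/b) (take (Suc j) xs) \<noteq> 0 \<and>
            reduced_num_dvd (a * cval (a/b) (take (Suc j) xs)) N"
    proof (intro allI impI)
      fix j assume "j < length xs - 1"
      then show "cval (a/b) (take (Suc j) xs) \<noteq> 0 \<and>
            reduced_num_dvd (a * cval (a/b) (take (Suc j) xs)) N"
        using snoc.prems(2) by (auto dest: spec[of _ j])
    qed
    then obtain xs' where xs': "length xs' = length xs"
      "\<forall>j<length xs. cval (a/b') (take (Suc j) xs') = s * e^j * cval (a/b) (take (Suc j) xs)"
      using snoc.IH False by blast
    define p where "p = length xs - 1"
    have lp: "length xs = Suc p" using False p_def by (cases xs) auto
    define C where "C = cval (a/b) xs"
    have "C \<noteq> 0 \<and> reduced_num_dvd (a * C) N"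
      using snoc.prems(2) lp unfolding C_def by (auto dest: spec[of _ p])
    then obtain u v :: int where uv: "v > 0" "real_of_int a * C = real_of_int u / real_of_int v" "u dvd N" "C \<noteq> 0"
      unfolding reduced_num_dvd_def by blast
    have u0: "u \<noteq> 0" using uv pos by auto
    obtain K where K: "N = u * K" using uv(3) by blast
    define m' where "m' = s*e^(Suc p)*x - s*e^p*t*K*v"
    have C': "cval (a/b') xs' = s * e^p * C"
      using xs'(2)[rule_format, of p] lp xs'(1) unfolding C_def by simp
    have xs'ne: "xs' \<noteq> []" using xs'(1) False by auto
    show ?thesis
    proof (intro exI[of _ "xs' @ [m']"] conjI allI impI)
      show "length (xs' @ [m']) = length (xs @ [x])" using xs' by simp
    next
      fix j assume j: "j < length (xs @ [x])"
      show "cval (a/b') (take (Suc j) (xs' @ [m'])) = s * e^j * cval (a/b) (take (Suc j) (xs @ [x]))"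
      proof (cases "j < length xs")
        case True
        then show ?thesis using xs' by simp
      next
        case False
        then have jj: "j = Suc p" using j lp by simp
        have "cval (a/b') (take (Suc j) (xs' @ [m'])) = cval (a/b') (xs' @ [m'])"
          using jj lp xs'(1) by simp
        also have "\<dots> = m' + 1 / (a/b' * (s * e^p * C))"
          using cval_snoc[OF xs'ne] C' by simp
        also have "\<dots> = s * e^(Suc p) * (x + 1 / (a / b * C))"
          unfolding m'_def
          by (rule step_alg[OF pos bb[unfolded K] es uv(1) u0 uv(2)])
        also have "\<dots> = s * e^j * cval (a/b) (take (Suc j) (xs @ [x]))"
          using jj lp cval_snoc[OF xsne, of "a/b" x] C_def by simp
        finally show ?thesis .
      qed
    qed
  qed
qed


lemma weight_transfer:
  fixes s e :: int
  assumes "length ms' = length ms" "e=1 \<or> e=-1" "s=1 \<or> s=-1"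
    "\<forall>j<length ms. cval q' (take (Suc j) ms') = s * e^j * cval q (take (Suc j) ms)"
  shows "weight q' ms' = q' powr (real (plen ms) / 2) * (\<Prod>j<plen ms. \<bar>cval q (take (Suc j) ms)\<bar>)"
proof -
  have "(\<Prod>j<plen ms'. \<bar>cval q' (take (Suc j) ms')\<bar>) = (\<Prod>j<plen ms. \<bar>cval q (take (Suc j) ms)\<bar>)"
  proof (rule prod.cong)
    show "{..<plen ms'} = {..<plen ms}" using assms(1) by (simp add: plen_def)
  next
    fix j assume "j \<in> {..<plen ms}"
    then have "j < length ms" by (simp add: plen_def)
    then have "cval q' (take (Suc j) ms') = s * e^j * cval q (take (Suc j) ms)" using assms(4) by blast
    moreover have "\<bar>real_of_int (s * e^j)\<bar> = 1" using assms(2,3)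
      by (auto simp: abs_mult power_abs)
    ultimately show "\<bar>cval q' (take (Suc j) ms')\<bar> = \<bar>cval q (take (Suc j) ms)\<bar>"
      by (simp add: abs_mult)
  qed
  then show ?thesis using assms(1) by (simp add: weight_def plen_def)
qed

lemma prod_pos:
  assumes "is_path q ms"
  shows "(\<Prod>j<plen ms. \<bar>cval q (take (Suc j) ms)\<bar>) > 0"
  using assms unfolding is_path_def by (intro prod_pos) auto

lemma s3: fixes A Q :: real assumes "A > 0" "Q > 0"
  shows "Q powr (d/2) * A powr (-(d/2)) = (Q / A) powr (d/2)"
proof -
  have "(Q/A) powr (d/2) = Q powr (d/2) / A powr (d/2)" using assms by (simp add: powr_divide)
  moreover have "A powr (-(d/2)) = 1 / A powr (d/2)" by (simp add: powr_minus_divide)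
  ultimately show ?thesis by simp
qed

lemma s1: fixes A Pm Pn :: real assumes "A > 0" "Pm > 0" "Pn > 0" "A powr kk * Pm = A powr ll * Pn"
  shows "Pm / Pn = A powr ll / A powr kk"
proof -
  have "A powr kk > 0" "A powr ll > 0" using assms by auto
  then show ?thesis using assms(2,3,4) by (simp add: divide_simps) (metis mult.commute)
qed

lemma s4: fixes x d :: real assumes "x > 0" "d \<noteq> 0" shows "(x powr (d/2)) powr (2 / d) = x"
  using assms by (simp add: powr_powr)


lemma final_alg:
  fixes A Q Pm Pn bb bb' :: real and k l :: nat
  assumes "A > 0" "Q > 0" "Pm > 0" "Pn > 0" "bb > 0" "bb' > 0" "Q / A = bb' / bb" "k \<noteq> l"
    "A powr (real k / 2) * Pm = A powr (real l / 2) * Pn"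
  shows "bb' = ((Q powr (real k / 2) * Pm) / (Q powr (real l / 2) * Pn)) powr (2 / (real k - real l)) * bb"
proof -
  define d where "d = real k - real l"
  have d0: "d \<noteq> 0" using assms(8) d_def by simp
  have e1: "Pm / Pn = A powr (real l / 2) / A powr (real k / 2)"
    using s1[OF assms(1,3,4,9)] .
  have e2: "Q powr (real k / 2) / Q powr (real l / 2) = Q powr (d/2)"
    unfolding d_def by (metis powr_diff diff_divide_distrib)
  have e3: "A powr (real l / 2) / A powr (real k / 2) = A powr (-(d/2))"
    unfolding d_def by (metis powr_diff diff_divide_distrib minus_diff_eq)
  have "(Q powr (real k / 2) * Pm) / (Q powr (real l / 2) * Pn)
      = (Q powr (real k / 2) / Q powr (real l / 2)) * (Pm / Pn)" by simp
  also have "\<dots> = Q powr (d/2) * A powr (-(d/2))" unfolding e1 e2 e3 ..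
  also have "\<dots> = (Q / A) powr (d/2)" using s3[OF assms(1,2)] .
  finally have r: "(Q powr (real k / 2) * Pm) / (Q powr (real l / 2) * Pn) = (bb'/bb) powr (d/2)"
    using assms(7) by simp
  have "((bb'/bb) powr (d/2)) powr (2 / d) = bb'/bb"
    using s4 d0 assms(5,6) by simp
  then show ?thesis using r d_def assms(5) by simp
qed

lemma sign_pow: "(e::int) = 1 \<or> e = -1 \<Longrightarrow> e^n = 1 \<or> e^n = -1"
  by (cases "even n") auto

lemma path_transfer:
  fixes s e :: int
  assumes "length ms' = length ms" "e=1 \<or> e=-1" "s=1 \<or> s=-1"
    "\<forall>j<length ms. cval q' (take (Suc j) ms') = s * e^j * cval q (take (Suc j) ms)"
    "is_path q ms"
  shows "is_path q' ms' \<and> cval q' ms' = s * e^(plen ms) * cval q ms"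
proof
  have ne: "ms \<noteq> []" using assms(5) by (simp add: is_path_def)
  have "real_of_int (s * e^j) \<noteq> 0" for j using assms(2,3) by auto
  then show "is_path q' ms'" using assms ne unfolding is_path_def plen_def by auto
  have "cval q' ms' = cval q' (take (Suc (plen ms)) ms')" using assms(1) ne by (simp add: plen_def)
  also have "\<dots> = s * e^(plen ms) * cval q (take (Suc (plen ms)) ms)"
    using assms(4)[rule_format, of "plen ms"] ne by (simp add: plen_def)
  also have "take (Suc (plen ms)) ms = ms" using ne by (simp add: plen_def)
  finally show "cval q' ms' = s * e^(plen ms) * cval q ms" .
qed

theorem corollary6:
  fixes a b N :: int and ms ns :: "int list"
  assumes "a > 0" "b > 0" "coprime a b"
    and "is_path (a / b) ms" "is_path (a / b) ns"
    and "cval (a / b) ms = cval (a / b) ns"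
    and "N > 0"
    and "\<forall>j < plen ms. reduced_num_dvd (a * cval (a / b) (take (Suc j) ms)) N"
    and "\<forall>j < plen ns. reduced_num_dvd (a * cval (a / b) (take (Suc j) ns)) N"
  shows "(plen ms \<noteq> plen ns \<longrightarrow>
           (\<forall>b' :: int. b' > 0 \<and> ([b' = b] (mod N) \<or> [b' = - b] (mod N))
              \<and> real_of_int b' \<noteq> (weight (a / b) ms / weight (a / b) ns)
                    powr (2 / (real (plen ms) - real (plen ns))) * b
              \<longrightarrow> \<not> weight_unique (a / b')))
       \<and> (plen ms = plen ns \<and> weight (a / b) ms \<noteq> weight (a / b) ns \<longrightarrow>
           (\<forall>b' :: int. b' > 0 \<and> ([b' = b] (mod N) \<or> [b' = - b] (mod N))
              \<longrightarrow> \<not> weight_unique (a / b')))"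
proof -
  define k where "k = plen ms"
  define l where "l = plen ns"
  define Pm where "Pm = (\<Prod>j<plen ms. \<bar>cval (a/b) (take (Suc j) ms)\<bar>)"
  define Pn where "Pn = (\<Prod>j<plen ns. \<bar>cval (a/b) (take (Suc j) ns)\<bar>)"
  have Pm: "Pm > 0" unfolding Pm_def using prod_pos assms(4) by blast
  have Pn: "Pn > 0" unfolding Pn_def using prod_pos assms(5) by blast
  have wm: "weight (a/b) ms = (a/b) powr (real k / 2) * Pm" unfolding weight_def k_def Pm_def ..
  have wn: "weight (a/b) ns = (a/b) powr (real l / 2) * Pn" unfolding weight_def l_def Pn_def ..
  have msne: "ms \<noteq> []" and nsne: "ns \<noteq> []" using assms(4,5) by (auto simp: is_path_def)
  have hm: "\<forall>j<length ms - 1. cval (a/b) (take (Suc j) ms) \<noteq> 0 \<and>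
            reduced_num_dvd (a * cval (a/b) (take (Suc j) ms)) N"
    using assms(4,8) by (auto simp: is_path_def plen_def)
  have hn: "\<forall>j<length ns - 1. cval (a/b) (take (Suc j) ns) \<noteq> 0 \<and>
            reduced_num_dvd (a * cval (a/b) (take (Suc j) ns)) N"
    using assms(5,9) by (auto simp: is_path_def plen_def)
  have key: "(a/b') powr (real k / 2) * Pm = (a/b') powr (real l / 2) * Pn"
    if b'pos: "b' > 0" and cg: "[b' = b] (mod N) \<or> [b' = - b] (mod N)"
      and wu: "weight_unique (a/b')" for b' :: int
  proof -
    obtain e t :: int where es: "e = 1 \<or> e = -1" and bb: "b' = e*b + t*N"
    proof (cases "[b' = b] (mod N)")
      case True
      then obtain t where "b' - b = N * t" by (auto simp: cong_iff_dvd_diff dvd_def)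
      then show ?thesis using that[of 1 t] by (simp add: algebra_simps)
    next
      case False
      then have "[b' = - b] (mod N)" using cg by blast
      then obtain t where "b' - - b = N * t" by (auto simp: cong_iff_dvd_diff dvd_def)
      then show ?thesis using that[of "-1" t] by (simp add: algebra_simps)
    qed
    have s1: "(1::int) = 1 \<or> (1::int) = -1" by simp
    define s where "s = e^k * e^l"
    have ss: "s = 1 \<or> s = -1" unfolding s_def using sign_pow[OF es, of k] sign_pow[OF es, of l] by auto
    have ll: "e^l * e^l = 1" using sign_pow[OF es, of l] by auto
    obtain ms' where ms': "length ms' = length ms"
      "\<forall>j<length ms. cval (a/b') (take (Suc j) ms') = 1 * e^j * cval (a/b) (take (Suc j) ms)"
      using construct[OF assms(1,2) b'pos bb es s1 msne hm] by blast
    obtain ns' where ns': "length ns' = length ns"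
      "\<forall>j<length ns. cval (a/b') (take (Suc j) ns') = s * e^j * cval (a/b) (take (Suc j) ns)"
      using construct[OF assms(1,2) b'pos bb es ss nsne hn] by blast
    have pm: "is_path (a/b') ms' \<and> cval (a/b') ms' = 1 * e^k * cval (a/b) ms"
      using path_transfer[OF ms'(1) es s1 ms'(2) assms(4)] k_def by simp
    have pn: "is_path (a/b') ns' \<and> cval (a/b') ns' = s * e^l * cval (a/b) ns"
      using path_transfer[OF ns'(1) es ss ns'(2) assms(5)] l_def by simp
    have "real_of_int (s * e^l) = real_of_int (e^k * (e^l * e^l))" unfolding s_def
      by (simp add: algebra_simps)
    then have "real_of_int (s * e^l) = real_of_int (e^k)" using ll by simp
    then have "cval (a/b') ms' = cval (a/b') ns'" using pm pn assms(6) by simp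
    then have "weight (a/b') ms' = weight (a/b') ns'"
      using wu pm pn unfolding weight_unique_def by blast
    moreover have "weight (a/b') ms' = (a/b') powr (real k / 2) * Pm"
      using weight_transfer[OF ms'(1) es s1 ms'(2)] k_def Pm_def by simp
    moreover have "weight (a/b') ns' = (a/b') powr (real l / 2) * Pn"
      using weight_transfer[OF ns'(1) es ss ns'(2)] l_def Pn_def by simp
    ultimately show ?thesis by simp
  qed
  show ?thesis
  proof (intro conjI impI allI; elim conjE)
    fix b' :: int
    assume kl: "plen ms \<noteq> plen ns" and b'pos: "b' > 0"
      and cg: "[b' = b] (mod N) \<or> [b' = - b] (mod N)"
      and ne: "real_of_int b' \<noteq> (weight (a / b) ms / weight (a / b) ns)
                    powr (2 / (real (plen ms) - real (plen ns))) * b"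
    show "\<not> weight_unique (a / b')"
    proof
      assume wu: "weight_unique (a / b')"
      have H: "(a/b') powr (real k / 2) * Pm = (a/b') powr (real l / 2) * Pn" by (rule key[OF b'pos cg wu])
      have A: "real_of_int a / real_of_int b' > 0" using assms(1) b'pos by simp
      have Q: "real_of_int a / real_of_int b > 0" using assms(1,2) by simp
      have QA: "(real_of_int a / real_of_int b) / (real_of_int a / real_of_int b') = real_of_int b' / real_of_int b"
        using assms(1,2) b'pos by (simp add: field_simps)
      have "real_of_int b' = ((a/b) powr (real k / 2) * Pm / ((a/b) powr (real l / 2) * Pn)) powr (2 / (real k - real l)) * b"
        by (rule final_alg[OF A Q Pm Pn _ _ QA _ H]) (use assms(2) b'pos kl k_def l_def in auto)
      then show False using ne wm wn k_def l_def by simp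
    qed
  next
    fix b' :: int
    assume kl: "plen ms = plen ns" and wne: "weight (a / b) ms \<noteq> weight (a / b) ns"
      and b'pos: "b' > 0" and cg: "[b' = b] (mod N) \<or> [b' = - b] (mod N)"
    show "\<not> weight_unique (a / b')"
    proof
      assume wu: "weight_unique (a / b')"
      have H: "(a/b') powr (real k / 2) * Pm = (a/b') powr (real l / 2) * Pn" by (rule key[OF b'pos cg wu])
      have "(a/b') powr (real k / 2) > 0" using assms(1) b'pos by simp
      then have "Pm = Pn" using H kl k_def l_def by simp
      then show False using wne wm wn kl k_def l_def by simp
    qed
  qed
qed

end
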